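(* Let $n\ge1$, let $A_0,A_1\subseteq 2^{<\omega}$, let $C$ be $n$-fair for $A_0,A_1$, and let $B_0\cup B_1=\omega$ be a partition. Assume there is no infinite set $H$ with ($H\subseteq B_0$ or $H\subseteq B_1$) such that $H\oplus C$ is $n$-fair for $A_0,A_1$. Then for every condition $(F,X)$, every $i<2$, and every $p\in\omega$, there is an extension $(E,Y)$ of $(F,X)$ such that $E\cap B_i\cap(p,+\infty)\neq\emptyset$.
   Context: Conditions. A condition is a Mathias condition $(F,X)$ ($F$ finite, $X$ infinite, $\max F<\min X$) such that $X\oplus C$ is $n$-fair for $A_0,A_1$. A condition $(E,Y)$ extends $(F,X)$ if $F\subseteq E$, $Y\subseteq X$, and $E\setminus F\subseteq X$. Strings are finite binary strings, and $\preceq$ is the prefix relation. Two strings are incomparable if neither is a prefix of the other. Matrices. An $m$-by-$n$ matrix $M$ is an array of strings $\sigma_{i,j}$ ($i<m$, $j<n$), with rows $M(i)=(\sigma_{i,0},\dots,\sigma_{i,n-1})$. It is disjoint if each row consists of pairwise incomparable strings. Formulas. An $m$-by-$n$ formula is a formula with distinguished finite-set variables $U_{i,j}$. It is $\Sigma^{0,X}_1$ if it is $\Sigma^0_1$ relative to $X$. Valuations. An $M$-valuation is a tuple $V=(B_{i,j})$ of finite sets $B_{i,j}\subseteq\{\tau:\tau\succeq\sigma_{i,j}\}$. We write $\varphi(V)$ for $\varphi$ evaluated at $U_{i,j}:=B_{i,j}$, and $V(i)=(B_{i,0},\dots,B_{i,n-1})$. We write $V>s$ if all strings occurring in $V$ have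 length $>s$. Essential. $\varphi$ is essential in $M$ if for every $s$ there is an $M$-valuation $V>s$ with $\varphi(V)$. Diagonalization. An $M$-valuation $V$ diagonalizes against $A_0,A_1$ if for every $i<m$ there are components $L,R$ of $V(i)$ with $L\subseteq A_0$ and $R\subseteq A_1$. Fairness. For $n\ge1$, a set $X$ is $n$-fair for $A_0,A_1$ if the following holds: for every $m$, every $\Sigma^{0,X}_1$ $m$-by-$2^nm$ formula $\varphi$, and every $m$-by-$2^nm$ disjoint matrix $M$ in which $\varphi$ is essential, there is an $M$-valuation $V$ diagonalizing against $A_0,A_1$ with $\varphi(V)$. *)

theory Defs
  imports Main "HOL-Library.Nat_Bijection" "HOL-Library.Sublist"
begin

datatype recf =
    Zero
  | Succ
  | Proj nat
  | Orc
  | Comp recf "recf list"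
  | Prim recf recf
  | Mn recf

inductive eval :: "nat set \<Rightarrow> recf \<Rightarrow> nat list \<Rightarrow> nat \<Rightarrow> bool" for X :: "nat set" where
  ev_zero: "eval X Zero args 0"
| ev_succ: "eval X Succ (x # args) (Suc x)"
| ev_proj: "i < length args \<Longrightarrow> eval X (Proj i) args (args ! i)"
| ev_orc: "eval X Orc (x # args) (if x \<in> X then 1 else 0)"
| ev_comp: "list_all2 (\<lambda>g y. eval X g args y) gs ys \<Longrightarrow> eval X f ys r \<Longrightarrow> eval X (Comp f gs) args r"
| ev_prim0: "eval X f args r \<Longrightarrow> eval X (Prim f g) (0 # args) r"
| ev_primS: "eval X (Prim f g) (n # args) r \<Longrightarrow> eval X g (r # n # args) r'
             \<Longrightarrow> eval X (Prim f g) (Suc n # args) r'"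
| ev_mn: "eval X f (y # args) 0 \<Longrightarrow> (\<forall>z<y. \<exists>r. eval X f (z # args) (Suc r))
             \<Longrightarrow> eval X (Mn f) args y"

definition sigma01_in :: "nat set \<Rightarrow> nat set \<Rightarrow> bool" where
  "sigma01_in X P \<longleftrightarrow> (\<exists>f. \<forall>x. x \<in> P \<longleftrightarrow> (\<exists>r. eval X f [x] r))"

type_synonym str = "bool list"

definition incomparable :: "str \<Rightarrow> str \<Rightarrow> bool" where
  "incomparable s t \<longleftrightarrow> \<not> prefix s t \<and> \<not> prefix t s"

definition join :: "nat set \<Rightarrow> nat set \<Rightarrow> nat set" where
  "join X C = {2 * x | x. x \<in> X} \<union> {2 * x + 1 | x. x \<in> C}"

definition disjoint_matrix :: "nat \<Rightarrow> nat \<Rightarrow> (nat \<Rightarrow> nat \<Rightarrow> str) \<Rightarrow> bool" where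
  "disjoint_matrix m k M \<longleftrightarrow>
     (\<forall>i<m. \<forall>j<k. \<forall>j'<k. j \<noteq> j' \<longrightarrow> incomparable (M i j) (M i j'))"

definition is_valuation :: "nat \<Rightarrow> nat \<Rightarrow> (nat \<Rightarrow> nat \<Rightarrow> str) \<Rightarrow> (nat \<Rightarrow> nat \<Rightarrow> str set) \<Rightarrow> bool" where
  "is_valuation m k M V \<longleftrightarrow>
     (\<forall>i<m. \<forall>j<k. finite (V i j) \<and> (\<forall>\<tau>\<in>V i j. prefix (M i j) \<tau>))"

definition val_gt :: "nat \<Rightarrow> nat \<Rightarrow> (nat \<Rightarrow> nat \<Rightarrow> str set) \<Rightarrow> nat \<Rightarrow> bool" where
  "val_gt m k V s \<longleftrightarrow> (\<forall>i<m. \<forall>j<k. \<forall>\<tau>\<in>V i j. length \<tau> > s)"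

text \<open>A formula with distinguished finite-set variables U_ij is identified with the set of
  codes of the valuations satisfying it; it is Sigma^{0,X}_1 iff that set is X-c.e.\<close>

definition str_code :: "str \<Rightarrow> nat" where
  "str_code s = list_encode (map (\<lambda>b. if b then 1 else 0) s)"

definition fset_code :: "str set \<Rightarrow> nat" where
  "fset_code S = set_encode (str_code ` S)"

definition val_code :: "nat \<Rightarrow> nat \<Rightarrow> (nat \<Rightarrow> nat \<Rightarrow> str set) \<Rightarrow> nat" where
  "val_code m k V = list_encode (map (\<lambda>i. list_encode (map (\<lambda>j. fset_code (V i j)) [0..<k])) [0..<m])"

definition holds :: "nat set \<Rightarrow> nat \<Rightarrow> nat \<Rightarrow> (nat \<Rightarrow> nat \<Rightarrow> str set) \<Rightarrow> bool" where
  "holds \<phi> m k V \<longleftrightarrow> val_code m k V \<in> \<phi>"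

definition essential :: "nat set \<Rightarrow> nat \<Rightarrow> nat \<Rightarrow> (nat \<Rightarrow> nat \<Rightarrow> str) \<Rightarrow> bool" where
  "essential \<phi> m k M \<longleftrightarrow>
     (\<forall>s. \<exists>V. is_valuation m k M V \<and> val_gt m k V s \<and> holds \<phi> m k V)"

definition diagonalizes :: "nat \<Rightarrow> nat \<Rightarrow> (nat \<Rightarrow> nat \<Rightarrow> str set) \<Rightarrow> str set \<Rightarrow> str set \<Rightarrow> bool" where
  "diagonalizes m k V A0 A1 \<longleftrightarrow>
     (\<forall>i<m. \<exists>l<k. \<exists>r<k. V i l \<subseteq> A0 \<and> V i r \<subseteq> A1)"

definition fair :: "nat \<Rightarrow> str set \<Rightarrow> str set \<Rightarrow> nat set \<Rightarrow> bool" where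
  "fair n A0 A1 X \<longleftrightarrow>
     (\<forall>m \<phi> M. sigma01_in X \<phi> \<longrightarrow> disjoint_matrix m (2^n * m) M \<longrightarrow> essential \<phi> m (2^n * m) M \<longrightarrow>
        (\<exists>V. is_valuation m (2^n * m) M V \<and> diagonalizes m (2^n * m) V A0 A1 \<and> holds \<phi> m (2^n * m) V))"

definition is_condition :: "nat \<Rightarrow> str set \<Rightarrow> str set \<Rightarrow> nat set \<Rightarrow> nat set \<Rightarrow> nat set \<Rightarrow> bool" where
  "is_condition n A0 A1 C F X \<longleftrightarrow>
     finite F \<and> infinite X \<and> (\<forall>f\<in>F. \<forall>x\<in>X. f < x) \<and> fair n A0 A1 (join X C)"

definition extends :: "nat set \<Rightarrow> nat set \<Rightarrow> nat set \<Rightarrow> nat set \<Rightarrow> bool" where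
  "extends E Y F X \<longleftrightarrow> F \<subseteq> E \<and> Y \<subseteq> X \<and> E - F \<subseteq> X"

end

theory Submission
  imports Defs
begin

lemma ev_Zero[simp]: "eval X Zero args r \<longleftrightarrow> r = 0"
  by (subst eval.simps) auto
lemma ev_Succ[simp]: "eval X Succ args r \<longleftrightarrow> (\<exists>x a. args = x#a \<and> r = Suc x)"
  by (subst eval.simps) auto
lemma ev_Proj[simp]: "eval X (Proj i) args r \<longleftrightarrow> i < length args \<and> r = args!i"
  by (subst eval.simps) auto
lemma ev_Orc[simp]: "eval X Orc args r \<longleftrightarrow> (\<exists>x a. args = x#a \<and> r = (if x\<in>X then 1 else 0))"
  by (subst eval.simps) auto
lemma ev_Comp[simp]: "eval X (Comp f gs) args r \<longleftrightarrow> (\<exists>ys. list_all2 (\<lambda>g y. eval X g args y) gs ys \<and> eval X f ys r)"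
  by (subst eval.simps) auto
lemma ev_Prim_Nil[simp]: "eval X (Prim f g) [] r \<longleftrightarrow> False"
  by (subst eval.simps) auto
lemma ev_Prim0[simp]: "eval X (Prim f g) (0#args) r \<longleftrightarrow> eval X f args r"
  by (subst eval.simps) auto
lemma ev_PrimS[simp]: "eval X (Prim f g) (Suc n#args) r' \<longleftrightarrow> (\<exists>r. eval X (Prim f g) (n#args) r \<and> eval X g (r#n#args) r')"
  by (subst eval.simps) auto
lemma ev_Mn[simp]: "eval X (Mn f) args y \<longleftrightarrow> eval X f (y#args) 0 \<and> (\<forall>z<y. \<exists>r. eval X f (z#args) (Suc r))"
  by (subst eval.simps) auto

fun Eq :: "nat \<Rightarrow> recf" where
  "Eq 0 = Prim (Comp Succ [Zero]) Zero"
| "Eq (Suc c) = Prim Zero (Comp (Eq c) [Proj 1])"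

lemma Eq_ev: "eval X (Eq c) (q#rest) r \<longleftrightarrow> r = (if q = c then 1 else 0)"
proof (induction c arbitrary: q rest r)
  case 0
  show ?case
  proof (induction q arbitrary: r)
    case 0
    then show ?case by (auto simp: list_all2_Cons1)
  next
    case (Suc q)
    then show ?case by auto
  qed
next
  case (Suc c)
  note IHc = Suc.IH
  show ?case
  proof (induction q arbitrary: r)
    case 0
    then show ?case by auto
  next
    case (Suc q)
    have "eval X (Comp (Eq c) [Proj 1]) (r' # q # rest) r \<longleftrightarrow> r = (if q = c then 1 else 0)" for r'
      using IHc[of q "[]" r] by (auto simp: list_all2_Cons1)
    then show ?case using Suc.IH by auto
  qed
qed

definition Qc :: "nat \<Rightarrow> recf" where
  "Qc c = Comp (Prim (Proj 0) Zero) [Eq c, Orc]"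

lemma Qc_ev: "eval Or (Qc c) args r \<longleftrightarrow> (\<exists>x a. args = x#a \<and> r = (if x \<in> Or - {c} then 1 else 0))"
proof (cases args)
  case Nil
  have "\<not> eval Or (Eq c) [] e" for e by (cases c) auto
  then show ?thesis using Nil by (auto simp: Qc_def list_all2_Cons1)
next
  case (Cons q rest)
  show ?thesis
  proof
    assume "eval Or (Qc c) args r"
    then obtain ys where ys: "list_all2 (\<lambda>g y. eval Or g args y) [Eq c, Orc] ys"
      "eval Or (Prim (Proj 0) Zero) ys r" by (auto simp: Qc_def)
    then obtain e o' where "ys = [e, o']" "eval Or (Eq c) args e" "eval Or Orc args o'"
      by (auto simp: list_all2_Cons1)
    then show "\<exists>x a. args = x#a \<and> r = (if x \<in> Or - {c} then 1 else 0)"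
      using ys(2) Cons by (cases "q = c") (auto simp: Eq_ev)
  next
    assume "\<exists>x a. args = x#a \<and> r = (if x \<in> Or - {c} then 1 else 0)"
    then have r: "r = (if q \<in> Or - {c} then 1 else 0)" using Cons by auto
    let ?e = "if q = c then 1 else (0::nat)"
    let ?o = "if q \<in> Or then 1 else (0::nat)"
    have "list_all2 (\<lambda>g y. eval Or g args y) [Eq c, Orc] [?e, ?o]"
      using Cons by (simp add: Eq_ev)
    moreover have "eval Or (Prim (Proj 0) Zero) [?e, ?o] r"
      using r by (cases "q = c") auto
    ultimately show "eval Or (Qc c) args r" unfolding Qc_def ev_Comp by blast
  qed
qed

fun sub :: "recf \<Rightarrow> recf \<Rightarrow> recf" where
  "sub Q Orc = Q"
| "sub Q Zero = Zero"
| "sub Q Succ = Succ"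
| "sub Q (Proj i) = Proj i"
| "sub Q (Comp f gs) = Comp (sub Q f) (map (sub Q) gs)"
| "sub Q (Prim f g) = Prim (sub Q f) (sub Q g)"
| "sub Q (Mn f) = Mn (sub Q f)"

lemma sub_ev: "\<forall>args r. eval (Or - {c}) f args r \<longleftrightarrow> eval Or (sub (Qc c) f) args r"
proof (induction f)
  case Orc
  then show ?case by (auto simp: Qc_ev)
next
  case (Comp f gs)
  have L: "list_all2 (\<lambda>g y. eval (Or - {c}) g args y) gs ys \<longleftrightarrow>
           list_all2 (\<lambda>g y. eval Or g args y) (map (sub (Qc c)) gs) ys" for args ys
    using Comp.IH(2) by (auto simp: list_all2_conv_all_nth)
  show ?case using Comp.IH(1) by (simp add: L)
next
  case (Prim f g)
  have "eval (Or - {c}) (Prim f g) (n#args) r \<longleftrightarrow> eval Or (sub (Qc c) (Prim f g)) (n#args) r" for n args r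
  proof (induction n arbitrary: r)
    case 0
    then show ?case using Prim.IH by simp
  next
    case (Suc n)
    then show ?case using Prim.IH by simp
  qed
  then show ?case by (metis ev_Prim_Nil list.exhaust sub.simps(6))
next
  case (Mn f)
  then show ?case by simp
qed auto

lemma sigma_rem1: "sigma01_in (Or - {c}) P \<Longrightarrow> sigma01_in Or P"
  unfolding sigma01_in_def using sub_ev by blast

lemma sigma_rem: "finite D \<Longrightarrow> sigma01_in (Or - D) P \<Longrightarrow> sigma01_in Or P"
proof (induction D rule: finite_induct)
  case empty
  then show ?case by simp
next
  case (insert c D)
  have "Or - insert c D = (Or - D) - {c}" by auto
  then show ?case using insert sigma_rem1 by metis
qed

lemma fair_rem: "finite D \<Longrightarrow> fair n A0 A1 Or \<Longrightarrow> fair n A0 A1 (Or - D)"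
  unfolding fair_def using sigma_rem by blast

lemma join_cut: "join (X \<inter> {d<..}) C = join X C - {2*y | y. y \<le> d}"
  unfolding join_def by auto presburger+

lemma fair_cut: "fair n A0 A1 (join X C) \<Longrightarrow> fair n A0 A1 (join (X \<inter> {d<..}) C)"
  unfolding join_cut by (rule fair_rem) auto

theorem mainTheorem12:
  fixes n :: nat and A0 A1 :: "bool list set" and C :: "nat set" and B :: "nat \<Rightarrow> nat set"
  assumes "n \<ge> 1"
    and "fair n A0 A1 C"
    and "B 0 \<union> B 1 = UNIV" and "B 0 \<inter> B 1 = {}"
    and "\<not> (\<exists>H. infinite H \<and> (H \<subseteq> B 0 \<or> H \<subseteq> B 1) \<and> fair n A0 A1 (join H C))"
  shows "\<forall>F X. is_condition n A0 A1 C F X \<longrightarrow> (\<forall>i<2. \<forall>p.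
           \<exists>E Y. is_condition n A0 A1 C E Y \<and> extends E Y F X \<and> E \<inter> B i \<inter> {p<..} \<noteq> {})"
proof (intro allI impI)
  fix F X i p
  assume c: "is_condition n A0 A1 C F X" and i: "i < (2::nat)"
  have fin: "finite F" and inf: "infinite X" and lt: "\<forall>f\<in>F. \<forall>x\<in>X. f < x"
    and fr: "fair n A0 A1 (join X C)" using c unfolding is_condition_def by auto
  have infcut: "infinite (X \<inter> {d<..})" for d
  proof
    assume "finite (X \<inter> {d<..})"
    then have "finite ((X \<inter> {d<..}) \<union> {..d})" by auto
    moreover have "X \<subseteq> (X \<inter> {d<..}) \<union> {..d}" by auto
    ultimately show False using inf finite_subset by blast
  qed
  show "\<exists>E Y. is_condition n A0 A1 C E Y \<and> extends E Y F X \<and> E \<inter> B i \<inter> {p<..} \<noteq> {}"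
  proof (cases "finite (X \<inter> B i)")
    case True
    then obtain d where d: "\<forall>y\<in>X \<inter> B i. y \<le> d" using finite_nat_set_iff_bounded_le by blast
    let ?H = "X \<inter> {d<..}"
    have "?H \<subseteq> B (1 - i)"
    proof
      fix y assume "y \<in> ?H"
      then have "y \<in> X" "d < y" by auto
      then have "y \<notin> B i" using d by (metis IntI not_le)
      then show "y \<in> B (1 - i)" using assms(3) i by (cases i) auto
    qed
    then have "?H \<subseteq> B 0 \<or> ?H \<subseteq> B 1" using i by (cases i) auto
    moreover have "infinite ?H" by (rule infcut)
    moreover have "fair n A0 A1 (join ?H C)" by (rule fair_cut[OF fr])
    ultimately have False using assms(5) by blast
    then show ?thesis by blast
  next
    case False
    then obtain x where x0: "x \<in> X \<inter> B i" "\<not> x \<le> p"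
      using finite_nat_set_iff_bounded_le by blast
    then have x: "x \<in> X \<inter> B i" "x > p" by auto
    let ?E = "insert x F" and ?Y = "X \<inter> {x<..}"
    have "is_condition n A0 A1 C ?E ?Y"
      unfolding is_condition_def using fin infcut fair_cut[OF fr] lt x by auto
    moreover have "extends ?E ?Y F X" unfolding extends_def using x by auto
    moreover have "x \<in> ?E \<inter> B i \<inter> {p<..}" using x by auto
    ultimately show ?thesis by blast
  qed
qed

end
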